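(* Let $\alpha>-1$, $d\in\widetilde{D}$ (with the convention $d_{-1}=0$), $p=(L_n^{(\alpha+1)})_{n\in\mathbb{N}_0}$, $q=(L_n^{(\alpha)})_{n\in\mathbb{N}_0}$, and let $T=E_{p,d}$ be regarded as an operator in $H(q)$ with domain $\mathcal{P}_c$. For $g=\sum_kg_kq_k\in H(q)$: (i) $g\in D(T^* )$ iff $\sum_{k=0}^\infty\left|g_k\bar d_k+(\bar d_k-\bar d_{k-1})\sum_{t=0}^{k-1}g_t\right|^2<\infty$; (ii) for $g\in D(T^* )$, $T^*g=\sum_{k=0}^\infty\left(g_k\bar d_k+(\bar d_k-\bar d_{k-1})\sum_{t=0}^{k-1}g_t\right)q_k$; (iii) for $s\in\mathbb{N}_0$, $q_s\in D(T^* )$ iff $(\bar d_k-\bar d_{k-1})_{k\in\mathbb{N}_0}\in\ell_2$; (iv) if $(\bar d_k-\bar d_{k-1})_{k\in\mathbb{N}_0}\in\ell_2$, then $T$ is closable and (a) $g\in D(\overline{T})$ iff $\sum_{s=0}^\infty\left|g_sd_s+\sum_{k=s+1}^\infty(d_k-d_{k-1})g_k\right|^2<\infty$, (b) for $g\in D(\overline{T})$, $\overline{T}g=\sum_{s=0}^\infty\left(g_sd_s+\sum_{k=s+1}^\infty(d_k-d_{k-1})g_k\right)q_s$.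
   Context: $\mathcal{P}_c$ is the space of polynomials in one real variable with complex coefficients. For $\beta>-1$, $L_n^{(\beta)}(x)=\sum_{k=0}^n\frac{(-1)^k}{k!}\binom{n+\beta}{n-k}x^k$ is the generalized Laguerre polynomial. For a sequence $Q=(Q_n)$ of polynomials with $\deg Q_n=n$, $H(Q)$ is the completion of $\mathcal{P}_c$ with respect to the inner product making $(Q_n)$ orthonormal (so here the unnormalized $L_n^{(\alpha)}$ are orthonormal); $g\in H(Q)$ is written $g=\sum_kg_kQ_k$, $(g_k)\in\ell_2$. $\widetilde{D}$ is the set of non-constant sequences of non-zero complex numbers. For a polynomial sequence $p$ and $d\in\widetilde{D}$, $E_{p,d}$ is the linear map on $\mathcal{P}_c$ with $E_{p,d}(p_n)=d_np_n$. $T^*$ denotes the adjoint and $\overline{T}$ the closure. *)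

theory Defs
  imports "HOL-Analysis.Analysis" "HOL-Computational_Algebra.Polynomial"
begin

definition laguerre :: "real \<Rightarrow> nat \<Rightarrow> complex poly" where
  "laguerre \<beta> n = (\<Sum>k\<le>n. monom (complex_of_real
       ((-1)^k / fact k * ((real n + \<beta>) gchoose (n - k)))) k)"

definition fin_supp :: "(nat \<Rightarrow> complex) set" where
  "fin_supp = {c. finite {k. c k \<noteq> 0}}"

definition series :: "(nat \<Rightarrow> complex poly) \<Rightarrow> (nat \<Rightarrow> complex) \<Rightarrow> complex poly" where
  "series Q c = (\<Sum>k\<in>{k. c k \<noteq> 0}. smult (c k) (Q k))"

(* coefficients of a polynomial f in the basis Q (unique since deg Q_n = n) *)
definition coords :: "(nat \<Rightarrow> complex poly) \<Rightarrow> complex poly \<Rightarrow> (nat \<Rightarrow> complex)" where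
  "coords Q f = (THE c. c \<in> fin_supp \<and> f = series Q c)"

definition E_op :: "(nat \<Rightarrow> complex poly) \<Rightarrow> (nat \<Rightarrow> complex) \<Rightarrow> complex poly \<Rightarrow> complex poly" where
  "E_op p d f = series p (\<lambda>n. d n * coords p f n)"

definition Dtilde :: "(nat \<Rightarrow> complex) set" where
  "Dtilde = {d. (\<forall>n. d n \<noteq> 0) \<and> (\<exists>m n. d m \<noteq> d n)}"

(* H(Q) is identified with l2 via g = \<Sum> g_k Q_k *)
definition l2 :: "(nat \<Rightarrow> complex) set" where
  "l2 = {g. summable (\<lambda>k. (cmod (g k))\<^sup>2)}"

definition l2_inner :: "(nat \<Rightarrow> complex) \<Rightarrow> (nat \<Rightarrow> complex) \<Rightarrow> complex" where
  "l2_inner f g = (\<Sum>k. f k * cnj (g k))"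

definition l2_norm :: "(nat \<Rightarrow> complex) \<Rightarrow> real" where
  "l2_norm f = sqrt (\<Sum>k. (cmod (f k))\<^sup>2)"

(* a (possibly unbounded) operator in l2 is given by a domain Dom and a map T *)
definition adj_dom :: "(nat \<Rightarrow> complex) set \<Rightarrow> ((nat \<Rightarrow> complex) \<Rightarrow> (nat \<Rightarrow> complex))
    \<Rightarrow> (nat \<Rightarrow> complex) set" where
  "adj_dom Dom T = {g \<in> l2. \<exists>h\<in>l2. \<forall>f\<in>Dom. l2_inner (T f) g = l2_inner f h}"

definition adj :: "(nat \<Rightarrow> complex) set \<Rightarrow> ((nat \<Rightarrow> complex) \<Rightarrow> (nat \<Rightarrow> complex))
    \<Rightarrow> (nat \<Rightarrow> complex) \<Rightarrow> (nat \<Rightarrow> complex)" where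
  "adj Dom T g = (THE h. h \<in> l2 \<and> (\<forall>f\<in>Dom. l2_inner (T f) g = l2_inner f h))"

definition graph_closure :: "(nat \<Rightarrow> complex) set \<Rightarrow> ((nat \<Rightarrow> complex) \<Rightarrow> (nat \<Rightarrow> complex))
    \<Rightarrow> ((nat \<Rightarrow> complex) \<times> (nat \<Rightarrow> complex)) set" where
  "graph_closure Dom T = {(g, h). g \<in> l2 \<and> h \<in> l2 \<and>
     (\<exists>f. (\<forall>n. f n \<in> Dom) \<and> (\<lambda>n. l2_norm (f n - g)) \<longlonglongrightarrow> 0
          \<and> (\<lambda>n. l2_norm (T (f n) - h)) \<longlonglongrightarrow> 0)}"

definition closable :: "(nat \<Rightarrow> complex) set \<Rightarrow> ((nat \<Rightarrow> complex) \<Rightarrow> (nat \<Rightarrow> complex)) \<Rightarrow> bool" where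
  "closable Dom T \<longleftrightarrow> (\<forall>g h h'. (g, h) \<in> graph_closure Dom T \<and> (g, h') \<in> graph_closure Dom T \<longrightarrow> h = h')"

definition closure_dom :: "(nat \<Rightarrow> complex) set \<Rightarrow> ((nat \<Rightarrow> complex) \<Rightarrow> (nat \<Rightarrow> complex))
    \<Rightarrow> (nat \<Rightarrow> complex) set" where
  "closure_dom Dom T = {g. \<exists>h. (g, h) \<in> graph_closure Dom T}"

definition closure_op :: "(nat \<Rightarrow> complex) set \<Rightarrow> ((nat \<Rightarrow> complex) \<Rightarrow> (nat \<Rightarrow> complex))
    \<Rightarrow> (nat \<Rightarrow> complex) \<Rightarrow> (nat \<Rightarrow> complex)" where
  "closure_op Dom T g = (THE h. (g, h) \<in> graph_closure Dom T)"

(* T = E_{p,d} with p = (L_n^(alpha+1)), q = (L_n^(alpha)), as an operator in H(q) with domain P_c,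
   written in q-coordinates: domain = finitely supported sequences *)
definition T_op :: "real \<Rightarrow> (nat \<Rightarrow> complex) \<Rightarrow> (nat \<Rightarrow> complex) \<Rightarrow> (nat \<Rightarrow> complex)" where
  "T_op \<alpha> d c = coords (laguerre \<alpha>) (E_op (laguerre (\<alpha> + 1)) d (series (laguerre \<alpha>) c))"

definition dprev :: "(nat \<Rightarrow> complex) \<Rightarrow> nat \<Rightarrow> complex" where
  "dprev d k = (if k = 0 then 0 else d (k - 1))"

end

theory Submission
  imports Defs
begin


lemma coeff_lag: "coeff (laguerre \<beta> n) i = (if i \<le> n then complex_of_real ((-1)^i / fact i * ((real n + \<beta>) gchoose (n - i))) else 0)"
  unfolding laguerre_def by (simp add: coeff_sum coeff_monom)

lemma lag0: "laguerre (\<alpha>+1) 0 = laguerre \<alpha> 0"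
  by (rule poly_eqI) (simp add: coeff_lag)

lemma lag_rec: "laguerre (\<alpha>+1) (Suc j) = laguerre (\<alpha>+1) j + laguerre \<alpha> (Suc j)"
proof (rule poly_eqI)
  fix i
  show "coeff (laguerre (\<alpha>+1) (Suc j)) i = coeff (laguerre (\<alpha>+1) j + laguerre \<alpha> (Suc j)) i"
  proof (cases "i \<le> j")
    case True
    then have e: "Suc j - i = Suc (j - i)" by simp
    have "((real (Suc j) + (\<alpha>+1)) gchoose (Suc (j - i))) = (((real (Suc j) + \<alpha>) + 1) gchoose (Suc (j - i)))"
      by (simp add: algebra_simps)
    also have "\<dots> = ((real (Suc j) + \<alpha>) gchoose (j - i)) + ((real (Suc j) + \<alpha>) gchoose (Suc (j - i)))"
      by (rule gbinomial_Suc_Suc)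
    finally have "((real (Suc j) + (\<alpha>+1)) gchoose (Suc j - i)) = ((real j + (\<alpha>+1)) gchoose (j - i)) + ((real (Suc j) + \<alpha>) gchoose (Suc j - i))"
      by (simp add: e algebra_simps)
    then show ?thesis using True by (simp add: coeff_lag algebra_simps add_divide_distrib)
  next
    case False
    then show ?thesis by (cases "i = Suc j") (simp_all add: coeff_lag)
  qed
qed

lemma lag_lead: "coeff (laguerre \<beta> k) k \<noteq> 0"
  by (simp add: coeff_lag)

lemma lag_high: "k < i \<Longrightarrow> coeff (laguerre \<beta> k) i = 0"
  by (simp add: coeff_lag)

lemma fin_suppI: "(\<And>k. k \<ge> N \<Longrightarrow> c k = 0) \<Longrightarrow> c \<in> fin_supp"
proof -
  assume a: "\<And>k. k \<ge> N \<Longrightarrow> c k = 0"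
  have "{k. c k \<noteq> 0} \<subseteq> {..<N}" using a by (force simp: not_le[symmetric])
  then show ?thesis unfolding fin_supp_def by (auto intro: finite_subset)
qed

lemma fin_suppE: assumes "c \<in> fin_supp" obtains N where "\<And>k. k \<ge> N \<Longrightarrow> c k = 0"
proof -
  from assms have "finite {k. c k \<noteq> 0}" by (simp add: fin_supp_def)
  then obtain N where "\<forall>k\<in>{k. c k \<noteq> 0}. k < N" using finite_nat_bounded by blast
  then show ?thesis using that by (metis mem_Collect_eq not_le)
qed

lemma series_fin: assumes "\<And>k. k \<ge> N \<Longrightarrow> c k = 0"
  shows "series Q c = (\<Sum>k<N. smult (c k) (Q k))"
  unfolding series_def
proof (rule sum.mono_neutral_left)
  show "{k. c k \<noteq> 0} \<subseteq> {..<N}" using assms by (force simp: not_le[symmetric])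
qed auto

lemma sum_zero_coeffs:
  fixes Q :: "nat \<Rightarrow> complex poly"
  assumes lead: "\<And>k. coeff (Q k) k \<noteq> 0" and high: "\<And>k i. k < i \<Longrightarrow> coeff (Q k) i = 0"
  shows "(\<Sum>k<N. smult (x k) (Q k)) = 0 \<Longrightarrow> \<forall>k<N. x k = 0"
proof (induction N)
  case 0 then show ?case by simp
next
  case (Suc N)
  have "coeff (\<Sum>k<N. smult (x k) (Q k)) N = 0"
    by (simp add: coeff_sum high)
  moreover have "coeff ((\<Sum>k<N. smult (x k) (Q k)) + smult (x N) (Q N)) N = 0"
    using Suc.prems by simp
  ultimately have "x N * coeff (Q N) N = 0"
    by (simp only: coeff_add coeff_smult) simp
  then have xN: "x N = 0" using lead[of N] by simp
  then have "(\<Sum>k<N. smult (x k) (Q k)) = 0" using Suc.prems by simp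
  with Suc.IH xN show ?case using less_Suc_eq by auto
qed

lemma coords_eq:
  fixes Q :: "nat \<Rightarrow> complex poly"
  assumes lead: "\<And>k. coeff (Q k) k \<noteq> 0" and high: "\<And>k i. k < i \<Longrightarrow> coeff (Q k) i = 0"
    and c: "\<And>k. k \<ge> N \<Longrightarrow> c k = 0" and f: "f = series Q c"
  shows "coords Q f = c"
  unfolding coords_def
proof (rule the_equality)
  show "c \<in> fin_supp \<and> f = series Q c" using c f fin_suppI by blast
next
  fix c' assume "c' \<in> fin_supp \<and> f = series Q c'"
  then obtain M where M: "\<And>k. k \<ge> M \<Longrightarrow> c' k = 0" and f': "f = series Q c'"
    using fin_suppE by blast
  have "series Q c = (\<Sum>k<max N M. smult (c k) (Q k))" by (rule series_fin) (simp add: c)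
  moreover have "series Q c' = (\<Sum>k<max N M. smult (c' k) (Q k))" by (rule series_fin) (simp add: M)
  ultimately have eq: "(\<Sum>k<max N M. smult (c' k - c k) (Q k)) = 0"
    using f f' by (simp add: smult_diff_left sum_subtractf)
  have "\<forall>k<max N M. c' k - c k = 0" by (rule sum_zero_coeffs[where Q=Q, OF lead high eq])
  then show "c' = c"
  proof (intro ext)
    fix k assume h: "\<forall>k<max N M. c' k - c k = 0"
    show "c' k = c k"
    proof (cases "k < max N M")
      case True then show ?thesis using h by simp
    next
      case False then show ?thesis using c M by simp
    qed
  qed
qed



lemma q_as_p: "laguerre \<alpha> j = laguerre (\<alpha>+1) j - (if j = 0 then 0 else laguerre (\<alpha>+1) (j-1))"
  by (cases j) (simp_all add: lag0 lag_rec)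

lemma p_as_q: "laguerre (\<alpha>+1) n = (\<Sum>k\<le>n. laguerre \<alpha> k)"
  by (induction n) (simp_all add: lag0 lag_rec)

lemma smult_sum_r: "smult a (sum f A) = (\<Sum>k\<in>A. smult a (f k))"
  by (induction A rule: infinite_finite_induct) (simp_all add: smult_add_right)

lemma sum_q_to_p:
  "(\<Sum>j<N. smult (c j) (laguerre \<alpha> j)) = (\<Sum>n<N. smult (c n - c (Suc n)) (laguerre (\<alpha>+1) n))
     + smult (c N) (if N = 0 then 0 else laguerre (\<alpha>+1) (N-1))"
proof (induction N)
  case 0 then show ?case by simp
next
  case (Suc N)
  have "laguerre \<alpha> N + (if N = 0 then 0 else laguerre (\<alpha>+1) (N-1)) = laguerre (\<alpha>+1) N"
    using q_as_p[of \<alpha> N] by simp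
  then have h: "smult (c N) (laguerre \<alpha> N) + smult (c N) (if N = 0 then 0 else laguerre (\<alpha>+1) (N-1))
     = smult (c N) (laguerre (\<alpha>+1) N)" by (metis smult_add_right)
  have "(\<Sum>j<Suc N. smult (c j) (laguerre \<alpha> j)) = (\<Sum>n<N. smult (c n - c (Suc n)) (laguerre (\<alpha>+1) n))
     + (smult (c N) (if N = 0 then 0 else laguerre (\<alpha>+1) (N-1)) + smult (c N) (laguerre \<alpha> N))"
    using Suc by (simp add: add.assoc)
  also have "\<dots> = (\<Sum>n<N. smult (c n - c (Suc n)) (laguerre (\<alpha>+1) n)) + smult (c N) (laguerre (\<alpha>+1) N)"
    using h by (simp add: add.commute)
  also have "\<dots> = (\<Sum>n<Suc N. smult (c n - c (Suc n)) (laguerre (\<alpha>+1) n)) + smult (c (Suc N)) (laguerre (\<alpha>+1) N)"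
    by (simp add: smult_diff_left)
  finally show ?case by simp
qed

lemma sum_p_to_q:
  "(\<Sum>n<N. smult (x n) (laguerre (\<alpha>+1) n)) = (\<Sum>k<N. smult (\<Sum>n\<in>{k..<N}. x n) (laguerre \<alpha> k))"
proof (induction N)
  case 0 then show ?case by simp
next
  case (Suc N)
  have "(\<Sum>k<Suc N. smult (\<Sum>n\<in>{k..<Suc N}. x n) (laguerre \<alpha> k))
      = (\<Sum>k<Suc N. smult (\<Sum>n\<in>{k..<N}. x n) (laguerre \<alpha> k) + smult (x N) (laguerre \<alpha> k))"
    by (rule sum.cong) (auto simp: smult_add_left)
  also have "\<dots> = (\<Sum>k<N. smult (\<Sum>n\<in>{k..<N}. x n) (laguerre \<alpha> k)) + smult (x N) (\<Sum>k\<le>N. laguerre \<alpha> k)"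
    by (simp add: sum.distrib smult_sum_r smult_add_right lessThan_Suc_atMost[symmetric])
  finally show ?case using Suc by (simp add: p_as_q)
qed

definition Tform :: "(nat \<Rightarrow> complex) \<Rightarrow> nat \<Rightarrow> (nat \<Rightarrow> complex) \<Rightarrow> nat \<Rightarrow> complex" where
  "Tform d N c = (\<lambda>k. \<Sum>n\<in>{k..<N}. d n * (c n - c (Suc n)))"

lemma T_formula:
  assumes c: "\<And>k. k \<ge> N \<Longrightarrow> c k = 0"
  shows "T_op \<alpha> d c = Tform d N c"
proof -
  have s1: "series (laguerre \<alpha>) c = (\<Sum>k<N. smult (c k) (laguerre \<alpha> k))"
    by (rule series_fin) (simp add: c)
  also have "\<dots> = (\<Sum>n<N. smult (c n - c (Suc n)) (laguerre (\<alpha>+1) n))"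
    using sum_q_to_p[of c \<alpha> N] c[of N] by simp
  also have "\<dots> = series (laguerre (\<alpha>+1)) (\<lambda>n. c n - c (Suc n))"
    by (rule series_fin[symmetric]) (simp add: c)
  finally have s2: "series (laguerre \<alpha>) c = series (laguerre (\<alpha>+1)) (\<lambda>n. c n - c (Suc n))" .
  have co: "coords (laguerre (\<alpha>+1)) (series (laguerre \<alpha>) c) = (\<lambda>n. c n - c (Suc n))"
    by (rule coords_eq[OF lag_lead lag_high _ s2, of N]) (use c le_SucI in auto)
  have "E_op (laguerre (\<alpha>+1)) d (series (laguerre \<alpha>) c)
      = series (laguerre (\<alpha>+1)) (\<lambda>n. d n * (c n - c (Suc n)))"
    unfolding E_op_def co ..
  also have "\<dots> = (\<Sum>n<N. smult (d n * (c n - c (Suc n))) (laguerre (\<alpha>+1) n))"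
    by (rule series_fin) (simp add: c)
  also have "\<dots> = (\<Sum>k<N. smult (Tform d N c k) (laguerre \<alpha> k))"
    unfolding Tform_def by (rule sum_p_to_q)
  also have "\<dots> = series (laguerre \<alpha>) (Tform d N c)"
    by (rule series_fin[symmetric]) (simp add: Tform_def)
  finally have e: "E_op (laguerre (\<alpha>+1)) d (series (laguerre \<alpha>) c) = series (laguerre \<alpha>) (Tform d N c)" .
  show ?thesis unfolding T_op_def
    by (rule coords_eq[OF lag_lead lag_high _ e, of N]) (auto simp: Tform_def)
qed



definition hfun :: "(nat \<Rightarrow> complex) \<Rightarrow> (nat \<Rightarrow> complex) \<Rightarrow> nat \<Rightarrow> complex" where
  "hfun d g = (\<lambda>k. g k * cnj (d k) + (cnj (d k) - cnj (dprev d k)) * (\<Sum>t<k. g t))"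

lemma swap_lemma:
  fixes y X :: "nat \<Rightarrow> complex"
  shows "(\<Sum>k<N. (\<Sum>n\<in>{k..<N}. y n) * X k) = (\<Sum>n<N. y n * (\<Sum>k\<le>n. X k))"
proof (induction N)
  case 0 then show ?case by simp
next
  case (Suc N)
  have "(\<Sum>k<Suc N. (\<Sum>n\<in>{k..<Suc N}. y n) * X k) = (\<Sum>k<Suc N. (\<Sum>n\<in>{k..<N}. y n) * X k + y N * X k)"
    by (rule sum.cong) (auto simp: distrib_right)
  also have "\<dots> = (\<Sum>k<N. (\<Sum>n\<in>{k..<N}. y n) * X k) + y N * (\<Sum>k\<le>N. X k)"
    by (simp add: sum.distrib sum_distrib_left distrib_left lessThan_Suc_atMost[symmetric])
  finally show ?case using Suc by simp
qed

lemma parts_lemma: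
  fixes c Y Y' :: "nat \<Rightarrow> complex"
  assumes "Y' 0 = 0" "\<And>n. Y' (Suc n) = Y n"
  shows "(\<Sum>n<N. (c n - c (Suc n)) * Y n) = (\<Sum>n<N. c n * (Y n - Y' n)) - c N * Y' N"
proof (induction N)
  case 0 then show ?case using assms by simp
next
  case (Suc N) then show ?case using assms by (simp add: algebra_simps)
qed

lemma adj_ident:
  assumes c: "\<And>k. k \<ge> N \<Longrightarrow> c k = 0"
  shows "l2_inner (T_op \<alpha> d c) g = l2_inner c (hfun d g)"
proof -
  define Y where "Y n = d n * cnj (\<Sum>t<Suc n. g t)" for n
  define Y' where "Y' n = dprev d n * cnj (\<Sum>t<n. g t)" for n
  have TT: "T_op \<alpha> d c = Tform d N c" by (rule T_formula[OF c])
  have "l2_inner (T_op \<alpha> d c) g = (\<Sum>k<N. Tform d N c k * cnj (g k))"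
    unfolding l2_inner_def TT by (rule suminf_finite) (auto simp: Tform_def)
  also have "\<dots> = (\<Sum>n<N. (d n * (c n - c (Suc n))) * (\<Sum>k\<le>n. cnj (g k)))"
    unfolding Tform_def by (rule swap_lemma)
  also have "\<dots> = (\<Sum>n<N. (c n - c (Suc n)) * Y n)"
    by (rule sum.cong) (simp_all add: Y_def lessThan_Suc_atMost cnj_sum)
  also have "\<dots> = (\<Sum>n<N. c n * (Y n - Y' n)) - c N * Y' N"
    by (rule parts_lemma) (simp_all add: Y'_def Y_def dprev_def)
  also have "\<dots> = (\<Sum>n<N. c n * cnj (hfun d g n))"
    by (simp add: c Y_def Y'_def hfun_def cnj_sum algebra_simps)
  also have "\<dots> = l2_inner c (hfun d g)"
    unfolding l2_inner_def by (rule suminf_finite[symmetric]) (auto simp: c)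
  finally show ?thesis .
qed

lemma l2_inner_delta: "l2_inner (\<lambda>k. if k = n then 1 else 0) h = cnj (h n)"
  unfolding l2_inner_def by (subst suminf_finite[of "{n}"]) auto

lemma l2_inner_delta2: "l2_inner f (\<lambda>k. if k = n then 1 else 0) = f n"
  unfolding l2_inner_def by (subst suminf_finite[of "{n}"]) auto

lemma delta_fin: "(\<lambda>k. if k = n then (1::complex) else 0) \<in> fin_supp"
  by (rule fin_suppI[of "Suc n"]) auto

lemma adj_unique:
  assumes "\<forall>f\<in>fin_supp. l2_inner (T_op \<alpha> d f) g = l2_inner f h"
  shows "h = hfun d g"
proof
  fix n
  have "cnj (h n) = l2_inner (\<lambda>k. if k = n then 1 else 0) h" by (simp add: l2_inner_delta)
  also have "\<dots> = l2_inner (T_op \<alpha> d (\<lambda>k. if k = n then 1 else 0)) g" using assms delta_fin by simp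
  also have "\<dots> = l2_inner (\<lambda>k. if k = n then 1 else 0) (hfun d g)"
    by (rule adj_ident[of "Suc n"]) auto
  also have "\<dots> = cnj (hfun d g n)" by (simp add: l2_inner_delta)
  finally show "h n = hfun d g n" by simp
qed

lemma adj_dom_iff:
  assumes "g \<in> l2"
  shows "g \<in> adj_dom fin_supp (T_op \<alpha> d) \<longleftrightarrow> hfun d g \<in> l2"
proof
  assume "g \<in> adj_dom fin_supp (T_op \<alpha> d)"
  then obtain h where "h \<in> l2" "\<forall>f\<in>fin_supp. l2_inner (T_op \<alpha> d f) g = l2_inner f h"
    unfolding adj_dom_def by blast
  then show "hfun d g \<in> l2" using adj_unique by blast
next
  assume "hfun d g \<in> l2"
  moreover have "\<forall>f\<in>fin_supp. l2_inner (T_op \<alpha> d f) g = l2_inner f (hfun d g)"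
  proof
    fix f assume "f \<in> fin_supp"
    then obtain N where "\<And>k. k \<ge> N \<Longrightarrow> f k = 0" by (elim fin_suppE) blast
    then show "l2_inner (T_op \<alpha> d f) g = l2_inner f (hfun d g)" by (rule adj_ident)
  qed
  ultimately show "g \<in> adj_dom fin_supp (T_op \<alpha> d)" unfolding adj_dom_def using assms by blast
qed

lemma adj_eq:
  assumes "g \<in> adj_dom fin_supp (T_op \<alpha> d)"
  shows "adj fin_supp (T_op \<alpha> d) g = hfun d g"
proof -
  have g: "g \<in> l2" using assms by (simp add: adj_dom_def)
  have "hfun d g \<in> l2" using adj_dom_iff[OF g] assms by blast
  show ?thesis unfolding adj_def
  proof (rule the_equality)
    have "\<forall>f\<in>fin_supp. l2_inner (T_op \<alpha> d f) g = l2_inner f (hfun d g)"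
    proof
      fix f assume "f \<in> fin_supp"
      then obtain N where "\<And>k. k \<ge> N \<Longrightarrow> f k = 0" by (elim fin_suppE) blast
      then show "l2_inner (T_op \<alpha> d f) g = l2_inner f (hfun d g)" by (rule adj_ident)
    qed
    then show "hfun d g \<in> l2 \<and> (\<forall>f\<in>fin_supp. l2_inner (T_op \<alpha> d f) g = l2_inner f (hfun d g))"
      using \<open>hfun d g \<in> l2\<close> by blast
  qed (use adj_unique in blast)
qed



lemma l2_sq_ineq: "(cmod (a - b))\<^sup>2 \<le> 2 * (cmod a)\<^sup>2 + 2 * (cmod b)\<^sup>2"
proof -
  have "cmod (a - b) \<le> cmod a + cmod b" by (rule norm_triangle_ineq4)
  then have "(cmod (a - b))\<^sup>2 \<le> (cmod a + cmod b)\<^sup>2" by (simp add: power_mono)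
  also have "\<dots> \<le> 2 * (cmod a)\<^sup>2 + 2 * (cmod b)\<^sup>2"
  proof -
    have "0 \<le> (cmod a - cmod b)\<^sup>2" by simp
    then show ?thesis unfolding power2_diff power2_sum by linarith
  qed
  finally show ?thesis .
qed

lemma l2_diff: assumes "x \<in> l2" "y \<in> l2" shows "(\<lambda>k. x k - y k) \<in> l2"
proof -
  have s: "summable (\<lambda>k. 2 * (cmod (x k))\<^sup>2 + 2 * (cmod (y k))\<^sup>2)"
    using assms unfolding l2_def by (auto intro!: summable_add summable_mult)
  have "summable (\<lambda>k. (cmod (x k - y k))\<^sup>2)"
    by (rule summable_comparison_test[OF _ s]) (simp add: l2_sq_ineq)
  then show ?thesis unfolding l2_def by simp
qed

lemma l2_diff': "x \<in> l2 \<Longrightarrow> y \<in> l2 \<Longrightarrow> x - y \<in> l2"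
  using l2_diff[of x y] by (simp add: fun_diff_def)

lemma prod_ineq: "cmod a * cmod b \<le> (cmod a)\<^sup>2 + (cmod b)\<^sup>2"
proof -
  have "0 \<le> (cmod a - cmod b)\<^sup>2" by simp
  moreover have "0 \<le> cmod a * cmod b" by simp
  ultimately show ?thesis unfolding power2_diff by linarith
qed

lemma l2_prod: "x \<in> l2 \<Longrightarrow> y \<in> l2 \<Longrightarrow> summable (\<lambda>k. cmod (x k) * cmod (y k))"
proof -
  assume a: "x \<in> l2" "y \<in> l2"
  have s: "summable (\<lambda>k. (cmod (x k))\<^sup>2 + (cmod (y k))\<^sup>2)"
    using a unfolding l2_def by (auto intro!: summable_add)
  show ?thesis by (rule summable_comparison_test[OF _ s]) (simp add: prod_ineq abs_mult)
qed

lemma l2_cnj: "(\<lambda>k. cnj (x k)) \<in> l2 \<longleftrightarrow> x \<in> l2"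
  by (simp add: l2_def)

lemma fin_l2: assumes "x \<in> fin_supp" shows "x \<in> l2"
proof -
  obtain N where N: "\<And>k. k \<ge> N \<Longrightarrow> x k = 0" using assms by (elim fin_suppE) blast
  have "summable (\<lambda>k. (cmod (x k))\<^sup>2)"
    by (rule summable_finite[of "{..<N}"]) (use N in auto)
  then show ?thesis by (simp add: l2_def)
qed

lemma l2_nonneg: "x \<in> l2 \<Longrightarrow> 0 \<le> (\<Sum>k. (cmod (x k))\<^sup>2)"
  unfolding l2_def by (rule suminf_nonneg) auto

lemma CS: assumes "x \<in> l2" "y \<in> l2"
  shows "(\<Sum>k. cmod (x k) * cmod (y k)) \<le> l2_norm x * l2_norm y"
proof (rule suminf_le_const[OF l2_prod[OF assms]])
  fix n
  have "(\<Sum>k<n. cmod (x k) * cmod (y k)) = (\<Sum>k<n. \<bar>cmod (x k)\<bar> * \<bar>cmod (y k)\<bar>)" by simp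
  also have "\<dots> \<le> L2_set (\<lambda>k. cmod (x k)) {..<n} * L2_set (\<lambda>k. cmod (y k)) {..<n}"
    by (rule L2_set_mult_ineq)
  also have "\<dots> \<le> l2_norm x * l2_norm y"
  proof -
    have sx: "summable (\<lambda>k. (cmod (x k))\<^sup>2)" and sy: "summable (\<lambda>k. (cmod (y k))\<^sup>2)"
      using assms by (simp_all add: l2_def)
    have a: "(\<Sum>k<n. (cmod (x k))\<^sup>2) \<le> (\<Sum>k. (cmod (x k))\<^sup>2)"
      by (rule sum_le_suminf[OF sx]) simp_all
    have b: "(\<Sum>k<n. (cmod (y k))\<^sup>2) \<le> (\<Sum>k. (cmod (y k))\<^sup>2)"
      by (rule sum_le_suminf[OF sy]) simp_all
    show ?thesis unfolding L2_set_def l2_norm_def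
    proof (rule mult_mono)
      show "0 \<le> sqrt (\<Sum>k. (cmod (x k))\<^sup>2)" using suminf_nonneg[OF sx] by simp
      show "0 \<le> sqrt (\<Sum>i<n. (cmod (y i))\<^sup>2)" by (simp add: sum_nonneg)
    qed (use a b in \<open>simp_all add: real_sqrt_le_mono\<close>)
  qed
  finally show "(\<Sum>k<n. cmod (x k) * cmod (y k)) \<le> l2_norm x * l2_norm y" .
qed

lemma coord_le: assumes "x \<in> l2" shows "cmod (x s) \<le> l2_norm x"
proof -
  have "(cmod (x s))\<^sup>2 = (\<Sum>k\<in>{s}. (cmod (x k))\<^sup>2)" by simp
  also have "\<dots> \<le> (\<Sum>k. (cmod (x k))\<^sup>2)"
    using assms unfolding l2_def by (intro sum_le_suminf) simp_all
  finally show ?thesis unfolding l2_norm_def by (simp add: real_le_rsqrt)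
qed

lemma l2_mult_summable: assumes "x \<in> l2" "y \<in> l2" shows "summable (\<lambda>k. x k * y k)"
proof (rule summable_norm_cancel)
  have "summable (\<lambda>k. cmod (x k) * cmod (y k))" by (rule l2_prod[OF assms])
  then show "summable (\<lambda>k. norm (x k * y k))" by (simp add: norm_mult)
qed

lemma inner_cont: assumes "x \<in> l2" "y \<in> l2" "h \<in> l2"
  shows "cmod (l2_inner x h - l2_inner y h) \<le> l2_norm (x - y) * l2_norm h"
proof -
  have h': "(\<lambda>k. cnj (h k)) \<in> l2" using assms l2_cnj by blast
  have sx: "summable (\<lambda>k. x k * cnj (h k))" by (rule l2_mult_summable[OF assms(1) h'])
  have sy: "summable (\<lambda>k. y k * cnj (h k))" by (rule l2_mult_summable[OF assms(2) h'])
  have xy: "x - y \<in> l2" using l2_diff' assms by blast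
  have "l2_inner x h - l2_inner y h = (\<Sum>k. x k * cnj (h k) - y k * cnj (h k))"
    unfolding l2_inner_def by (rule suminf_diff[OF sx sy])
  also have "\<dots> = (\<Sum>k. (x - y) k * cnj (h k))" by (simp add: algebra_simps)
  finally have eq: "l2_inner x h - l2_inner y h = (\<Sum>k. (x - y) k * cnj (h k))" .
  have sp: "summable (\<lambda>k. cmod ((x - y) k) * cmod (cnj (h k)))" by (rule l2_prod[OF xy h'])
  have "cmod (\<Sum>k. (x - y) k * cnj (h k)) \<le> (\<Sum>k. norm ((x - y) k * cnj (h k)))"
    by (rule summable_norm) (use sp in \<open>simp add: norm_mult\<close>)
  also have "\<dots> = (\<Sum>k. cmod ((x - y) k) * cmod (cnj (h k)))" by (simp add: norm_mult)
  also have "\<dots> \<le> l2_norm (x - y) * l2_norm (\<lambda>k. cnj (h k))" by (rule CS[OF xy h'])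
  also have "l2_norm (\<lambda>k. cnj (h k)) = l2_norm h" by (simp add: l2_norm_def)
  finally show ?thesis using eq by (simp add: fun_diff_def)
qed



lemma sum_delta_lt: "(\<Sum>t<(k::nat). if t = s then (1::complex) else 0) = (if s < k then 1 else 0)"
  by (subst sum.delta) (auto simp: finite_lessThan)

lemma hfun_delta: "hfun d (\<lambda>k. if k = s then 1 else 0) k
   = (if k = s then cnj (d k) else 0) + (cnj (d k) - cnj (dprev d k)) * (if s < k then 1 else 0)"
  unfolding hfun_def sum_delta_lt by simp

lemma iii: "hfun d (\<lambda>k. if k = s then 1 else 0) \<in> l2 \<longleftrightarrow> (\<lambda>k. cnj (d k) - cnj (dprev d k)) \<in> l2"
proof -
  have "eventually (\<lambda>k. (cmod (hfun d (\<lambda>k. if k = s then 1 else 0) k))\<^sup>2 = (cmod (cnj (d k) - cnj (dprev d k)))\<^sup>2) sequentially"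
    using eventually_gt_at_top[of s] by eventually_elim (simp add: hfun_delta)
  then show ?thesis unfolding l2_def mem_Collect_eq by (rule summable_cong)
qed

definition Sop :: "(nat \<Rightarrow> complex) \<Rightarrow> (nat \<Rightarrow> complex) \<Rightarrow> nat \<Rightarrow> complex" where
  "Sop d g = (\<lambda>s. g s * d s + (\<Sum>k. (d (k + s + 1) - d (k + s)) * g (k + s + 1)))"

lemma e_l2: assumes "(\<lambda>k. cnj (d k) - cnj (dprev d k)) \<in> l2"
  shows "(\<lambda>k. d k - dprev d k) \<in> l2"
proof -
  have "(\<lambda>k. (cmod (cnj (d k) - cnj (dprev d k)))\<^sup>2) = (\<lambda>k. (cmod (d k - dprev d k))\<^sup>2)"
    by (simp flip: complex_cnj_diff)
  then show ?thesis using assms unfolding l2_def by simp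
qed

lemma S_inner:
  assumes e': "(\<lambda>k. cnj (d k) - cnj (dprev d k)) \<in> l2" and g: "g \<in> l2"
  shows "l2_inner g (hfun d (\<lambda>k. if k = s then 1 else 0)) = Sop d g s"
proof -
  define e where "e k = d k - dprev d k" for k
  have e: "e \<in> l2" using e_l2[OF e'] by (simp add: e_def[abs_def])
  define A where "A k = (if k = s then g s * d s else 0)" for k
  define B where "B k = (if s < k then e k * g k else 0)" for k
  have tm: "g k * cnj (hfun d (\<lambda>k. if k = s then 1 else 0) k) = A k + B k" for k
    by (simp add: hfun_delta A_def B_def e_def algebra_simps)
  have sA: "summable A" by (rule summable_finite[of "{s}"]) (auto simp: A_def)
  have sB: "summable B"
    by (rule summable_comparison_test[OF _ l2_prod[OF e g]]) (auto simp: B_def norm_mult)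
  have "l2_inner g (hfun d (\<lambda>k. if k = s then 1 else 0)) = (\<Sum>k. A k + B k)"
    unfolding l2_inner_def tm ..
  also have "\<dots> = suminf A + suminf B" by (rule suminf_add[OF sA sB, symmetric])
  also have "suminf A = g s * d s" by (subst suminf_finite[of "{s}"]) (auto simp: A_def)
  also have "suminf B = (\<Sum>n. B (n + Suc s)) + (\<Sum>i<Suc s. B i)"
    by (rule suminf_split_initial_segment[OF sB])
  also have "(\<Sum>i<Suc s. B i) = 0" by (simp add: B_def)
  also have "(\<lambda>n. B (n + Suc s)) = (\<lambda>k. (d (k + s + 1) - d (k + s)) * g (k + s + 1))"
    by (simp add: B_def e_def dprev_def)
  finally show ?thesis by (simp add: Sop_def)
qed

lemma T_fin: assumes "f \<in> fin_supp" shows "T_op \<alpha> d f \<in> fin_supp"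
proof -
  obtain N where N: "\<And>k. k \<ge> N \<Longrightarrow> f k = 0" using assms by (elim fin_suppE) blast
  have TT: "T_op \<alpha> d f = Tform d N f" by (rule T_formula[OF N])
  show ?thesis unfolding TT by (rule fin_suppI[of N]) (simp add: Tform_def)
qed

lemma closure_char:
  assumes e': "(\<lambda>k. cnj (d k) - cnj (dprev d k)) \<in> l2"
    and gh: "(g, h) \<in> graph_closure fin_supp (T_op \<alpha> d)"
  shows "h = Sop d g"
proof
  fix s
  from gh obtain f where g: "g \<in> l2" and h: "h \<in> l2" and f: "\<And>n. f n \<in> fin_supp"
    and l1: "(\<lambda>n. l2_norm (f n - g)) \<longlonglongrightarrow> 0" and l2: "(\<lambda>n. l2_norm (T_op \<alpha> d (f n) - h)) \<longlonglongrightarrow> 0"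
    unfolding graph_closure_def by blast
  define H where "H = hfun d (\<lambda>k. if k = s then 1 else 0)"
  have H: "H \<in> l2" unfolding H_def using iii e' by blast
  have eq: "T_op \<alpha> d (f n) s = l2_inner (f n) H" for n
  proof -
    obtain N where N: "\<And>k. k \<ge> N \<Longrightarrow> f n k = 0" using f[of n] by (elim fin_suppE) blast
    have "T_op \<alpha> d (f n) s = l2_inner (T_op \<alpha> d (f n)) (\<lambda>k. if k = s then 1 else 0)"
      by (simp add: l2_inner_delta2)
    also have "\<dots> = l2_inner (f n) H" unfolding H_def by (rule adj_ident[OF N])
    finally show ?thesis .
  qed
  have c1: "(\<lambda>n. T_op \<alpha> d (f n) s) \<longlonglongrightarrow> h s"
  proof (rule LIM_zero_cancel, rule Lim_null_comparison[OF _ l2])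
    show "\<forall>\<^sub>F n in sequentially. norm (T_op \<alpha> d (f n) s - h s) \<le> l2_norm (T_op \<alpha> d (f n) - h)"
    proof (rule always_eventually, rule allI)
      fix n
      have "T_op \<alpha> d (f n) - h \<in> l2" using l2_diff'[OF fin_l2[OF T_fin[OF f]] h] .
      then show "norm (T_op \<alpha> d (f n) s - h s) \<le> l2_norm (T_op \<alpha> d (f n) - h)"
        using coord_le[of "T_op \<alpha> d (f n) - h" s] by simp
    qed
  qed
  have c2: "(\<lambda>n. l2_inner (f n) H) \<longlonglongrightarrow> l2_inner g H"
  proof (rule LIM_zero_cancel, rule Lim_null_comparison)
    show "\<forall>\<^sub>F n in sequentially. norm (l2_inner (f n) H - l2_inner g H) \<le> l2_norm (f n - g) * l2_norm H"
      by (rule always_eventually, rule allI, rule inner_cont[OF fin_l2[OF f] g H])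
    show "(\<lambda>n. l2_norm (f n - g) * l2_norm H) \<longlonglongrightarrow> 0"
      using tendsto_mult[OF l1 tendsto_const[of "l2_norm H"]] by simp
  qed
  have "h s = l2_inner g H" using LIMSEQ_unique[OF c1] c2 eq by simp
  then show "h s = Sop d g s" unfolding H_def using S_inner[OF e' g] by simp
qed



definition Pf :: "(nat \<Rightarrow> complex) \<Rightarrow> (nat \<Rightarrow> complex) \<Rightarrow> nat \<Rightarrow> complex" where
  "Pf d g k = (d (Suc k) - d k) * g (Suc k)"

lemma P_summable:
  assumes e': "(\<lambda>k. cnj (d k) - cnj (dprev d k)) \<in> l2" and g: "g \<in> l2"
  shows "summable (Pf d g)"
proof -
  have e: "(\<lambda>k. d k - dprev d k) \<in> l2" by (rule e_l2[OF e'])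
  have "summable (\<lambda>k. cmod (d k - dprev d k) * cmod (g k))" by (rule l2_prod[OF e g])
  then have s: "summable (\<lambda>k. cmod (d (Suc k) - dprev d (Suc k)) * cmod (g (Suc k)))"
    by (subst summable_Suc_iff)
  show ?thesis
    by (rule summable_comparison_test[OF _ s]) (simp add: Pf_def dprev_def norm_mult)
qed

lemma Sop_P: "Sop d g s = g s * d s + (\<Sum>j. Pf d g (j + s))"
  by (simp add: Sop_def Pf_def)

lemma S_step:
  assumes e': "(\<lambda>k. cnj (d k) - cnj (dprev d k)) \<in> l2" and g: "g \<in> l2"
  shows "Sop d g s - Sop d g (Suc s) = d s * (g s - g (Suc s))"
proof -
  have sP: "summable (\<lambda>j. Pf d g (j + s))"
    by (rule summable_ignore_initial_segment[OF P_summable[OF e' g]])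
  have "(\<Sum>j. Pf d g (Suc j + s)) = (\<Sum>j. Pf d g (j + s)) - Pf d g (0 + s)"
    by (rule suminf_split_head[OF sP])
  then have "(\<Sum>j. Pf d g (j + Suc s)) = (\<Sum>j. Pf d g (j + s)) - Pf d g s" by simp
  then show ?thesis by (simp add: Sop_P Pf_def algebra_simps)
qed

definition Trunc :: "(nat \<Rightarrow> complex) \<Rightarrow> nat \<Rightarrow> nat \<Rightarrow> complex" where
  "Trunc x N = (\<lambda>s. if s \<le> N then x s - x (Suc N) else 0)"

lemma Trunc_fin: "Trunc x N \<in> fin_supp"
  by (rule fin_suppI[of "Suc N"]) (simp add: Trunc_def)

lemma T_trunc:
  assumes e': "(\<lambda>k. cnj (d k) - cnj (dprev d k)) \<in> l2" and g: "g \<in> l2"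
  shows "T_op \<alpha> d (Trunc g N) = Trunc (Sop d g) N"
proof -
  have TT: "T_op \<alpha> d (Trunc g N) = Tform d (Suc N) (Trunc g N)"
    by (rule T_formula) (simp add: Trunc_def)
  show ?thesis
  proof
    fix k
    have "Tform d (Suc N) (Trunc g N) k = (\<Sum>n\<in>{k..<Suc N}. Sop d g n - Sop d g (Suc n))"
      unfolding Tform_def
    proof (rule sum.cong)
      fix n assume "n \<in> {k..<Suc N}"
      then have "n \<le> N" by simp
      then have "Trunc g N n - Trunc g N (Suc n) = g n - g (Suc n)"
      proof (cases "Suc n \<le> N")
        case False
        then have "n = N" using \<open>n \<le> N\<close> by simp
        then show ?thesis by (simp add: Trunc_def)
      qed (auto simp: Trunc_def)
      then show "d n * (Trunc g N n - Trunc g N (Suc n)) = Sop d g n - Sop d g (Suc n)"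
        using S_step[OF e' g, of n] by simp
    qed simp
    also have "\<dots> = Trunc (Sop d g) N k"
    proof (cases "k \<le> N")
      case True
      have "(\<Sum>n\<in>{k..<Suc N}. Sop d g n - Sop d g (Suc n)) = - (\<Sum>n\<in>{k..<Suc N}. Sop d g (Suc n) - Sop d g n)"
        by (simp add: sum_negf[symmetric])
      also have "\<dots> = Sop d g k - Sop d g (Suc N)"
      proof -
        have tele: "(\<Sum>n\<in>{k..<Suc N}. Sop d g (Suc n) - Sop d g n) = Sop d g (Suc N) - Sop d g k"
          by (rule sum_Suc_diff') (use True in simp)
        show ?thesis unfolding tele by simp
      qed
      finally show ?thesis using True by (simp add: Trunc_def)
    next
      case False then show ?thesis by (simp add: Trunc_def)
    qed
    finally show "T_op \<alpha> d (Trunc g N) k = Trunc (Sop d g) N k" using TT by simp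
  qed
qed

lemma trunc_err:
  assumes x: "x \<in> l2"
  shows "summable (\<lambda>s. (cmod ((Trunc x N - x) s))\<^sup>2)"
    "(\<Sum>s. (cmod ((Trunc x N - x) s))\<^sup>2) = real (Suc N) * (cmod (x (Suc N)))\<^sup>2 + (\<Sum>j. (cmod (x (j + Suc N)))\<^sup>2)"
proof -
  have ev: "eventually (\<lambda>s. (cmod ((Trunc x N - x) s))\<^sup>2 = (cmod (x s))\<^sup>2) sequentially"
    using eventually_gt_at_top[of N] by eventually_elim (simp add: Trunc_def)
  show s: "summable (\<lambda>s. (cmod ((Trunc x N - x) s))\<^sup>2)"
    using x unfolding l2_def summable_cong[OF ev] by simp
  have "(\<Sum>s. (cmod ((Trunc x N - x) s))\<^sup>2) = (\<Sum>n. (cmod ((Trunc x N - x) (n + Suc N)))\<^sup>2) + (\<Sum>i<Suc N. (cmod ((Trunc x N - x) i))\<^sup>2)"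
    by (rule suminf_split_initial_segment[OF s])
  also have "(\<Sum>i<Suc N. (cmod ((Trunc x N - x) i))\<^sup>2) = (\<Sum>i<Suc N. (cmod (x (Suc N)))\<^sup>2)"
    by (rule sum.cong) (auto simp: Trunc_def norm_minus_commute)
  also have "\<dots> = real (Suc N) * (cmod (x (Suc N)))\<^sup>2" by simp
  also have "(\<lambda>n. (cmod ((Trunc x N - x) (n + Suc N)))\<^sup>2) = (\<lambda>n. (cmod (x (n + Suc N)))\<^sup>2)"
    by (simp add: Trunc_def)
  finally show "(\<Sum>s. (cmod ((Trunc x N - x) s))\<^sup>2) = real (Suc N) * (cmod (x (Suc N)))\<^sup>2 + (\<Sum>j. (cmod (x (j + Suc N)))\<^sup>2)"
    by simp
qed

lemma choose_N:
  fixes a :: "nat \<Rightarrow> real"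
  assumes sa: "summable a" and nn: "\<And>k. 0 \<le> a k"
  shows "\<exists>N\<ge>n. real (Suc N) * a (Suc N) < inverse (real (Suc n))"
proof (rule ccontr)
  assume "\<not> ?thesis"
  then have H: "\<And>N. N \<ge> n \<Longrightarrow> inverse (real (Suc n)) \<le> real (Suc N) * a (Suc N)" by (simp add: not_less)
  define \<epsilon> where "\<epsilon> = inverse (real (Suc n))"
  have ep: "\<epsilon> > 0" by (simp add: \<epsilon>_def)
  have "summable (\<lambda>k. \<epsilon> * inverse (real k))"
  proof (rule summable_comparison_test'[OF sa])
    fix k assume k: "k \<ge> Suc n"
    then obtain N where N: "k = Suc N" "N \<ge> n" by (cases k) auto
    have "\<epsilon> \<le> real k * a k" using H[OF N(2)] N(1) by (simp add: \<epsilon>_def)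
    then have "\<epsilon> * inverse (real k) \<le> a k" using N(1)
      by (simp add: field_simps)
    then show "norm (\<epsilon> * inverse (real k)) \<le> a k" using ep by simp
  qed
  then have "summable (\<lambda>k. inverse (real k))" using ep by simp
  then show False using not_summable_harmonic[where 'a=real] by simp
qed



lemma conv:
  fixes a :: "nat \<Rightarrow> real" and Nn :: "nat \<Rightarrow> nat"
  assumes x: "x \<in> l2" and bound: "\<And>k. (cmod (x k))\<^sup>2 \<le> a k" and sa: "summable a"
    and nn: "\<And>k. 0 \<le> a k" and Nge: "\<And>n. n \<le> Nn n"
    and Nsm: "\<And>n. real (Suc (Nn n)) * a (Suc (Nn n)) < inverse (real (Suc n))"
  shows "(\<lambda>n. l2_norm (Trunc x (Nn n) - x)) \<longlonglongrightarrow> 0"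
proof -
  define tl where "tl m = (\<Sum>j. a (j + m))" for m
  have tl_eq: "tl m = suminf a - (\<Sum>i<m. a i)" for m
    unfolding tl_def using suminf_split_initial_segment[OF sa, of m] by simp
  have tl0: "tl \<longlonglongrightarrow> 0"
  proof -
    have "(\<lambda>m. suminf a - (\<Sum>i<m. a i)) \<longlonglongrightarrow> suminf a - suminf a"
      by (rule tendsto_diff[OF tendsto_const summable_LIMSEQ[OF sa]])
    then show ?thesis by (simp add: tl_eq[abs_def])
  qed
  define err where "err n = (\<Sum>s. (cmod ((Trunc x (Nn n) - x) s))\<^sup>2)" for n
  have sx: "summable (\<lambda>k. (cmod (x k))\<^sup>2)" using x by (simp add: l2_def)
  have err_le: "err n \<le> inverse (real (Suc n)) + tl n" for n
  proof -
    let ?N = "Nn n"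
    have "err n = real (Suc ?N) * (cmod (x (Suc ?N)))\<^sup>2 + (\<Sum>j. (cmod (x (j + Suc ?N)))\<^sup>2)"
      unfolding err_def by (rule trunc_err(2)[OF x])
    also have "\<dots> \<le> real (Suc ?N) * a (Suc ?N) + tl (Suc ?N)"
    proof (rule add_mono)
      show "real (Suc ?N) * (cmod (x (Suc ?N)))\<^sup>2 \<le> real (Suc ?N) * a (Suc ?N)"
        by (rule mult_left_mono[OF bound]) simp
      show "(\<Sum>j. (cmod (x (j + Suc ?N)))\<^sup>2) \<le> tl (Suc ?N)"
        unfolding tl_def
      proof (rule suminf_le)
        show "summable (\<lambda>j. (cmod (x (j + Suc ?N)))\<^sup>2)" by (rule summable_ignore_initial_segment[OF sx])
        show "summable (\<lambda>j. a (j + Suc ?N))" by (rule summable_ignore_initial_segment[OF sa])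
      qed (rule bound)
    qed
    also have "\<dots> \<le> inverse (real (Suc n)) + tl n"
    proof (rule add_mono)
      show "real (Suc ?N) * a (Suc ?N) \<le> inverse (real (Suc n))" using Nsm[of n] by simp
      have "(\<Sum>i<n. a i) \<le> (\<Sum>i<Suc ?N. a i)"
        by (rule sum_mono2) (use Nge[of n] nn in auto)
      then show "tl (Suc ?N) \<le> tl n" unfolding tl_eq by simp
    qed
    finally show ?thesis .
  qed
  have err0: "err \<longlonglongrightarrow> 0"
  proof (rule real_tendsto_sandwich[where f="\<lambda>n. 0" and h="\<lambda>n. inverse (real (Suc n)) + tl n"])
    show "\<forall>\<^sub>F n in sequentially. 0 \<le> err n"
      unfolding err_def using trunc_err(1)[OF x] by (auto intro!: always_eventually suminf_nonneg)
    show "\<forall>\<^sub>F n in sequentially. err n \<le> inverse (real (Suc n)) + tl n"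
      using err_le by (auto intro!: always_eventually)
    show "(\<lambda>n. inverse (real (Suc n)) + tl n) \<longlonglongrightarrow> 0"
      using tendsto_add[OF LIMSEQ_inverse_real_of_nat tl0] by simp
  qed simp
  have "(\<lambda>n. sqrt (err n)) \<longlonglongrightarrow> sqrt 0" by (rule tendsto_real_sqrt[OF err0])
  then show ?thesis by (simp add: err_def l2_norm_def)
qed

lemma closure_exists:
  assumes e': "(\<lambda>k. cnj (d k) - cnj (dprev d k)) \<in> l2" and g: "g \<in> l2" and S: "Sop d g \<in> l2"
  shows "(g, Sop d g) \<in> graph_closure fin_supp (T_op \<alpha> d)"
proof -
  define a where "a k = (cmod (g k))\<^sup>2 + (cmod (Sop d g k))\<^sup>2" for k
  have sa: "summable a" using g S unfolding a_def l2_def by (auto intro!: summable_add)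
  have nn: "\<And>k. 0 \<le> a k" by (simp add: a_def)
  have "\<forall>n. \<exists>N\<ge>n. real (Suc N) * a (Suc N) < inverse (real (Suc n))"
    using choose_N[OF sa nn] by blast
  then obtain Nn where Nn: "\<And>n. Nn n \<ge> n \<and> real (Suc (Nn n)) * a (Suc (Nn n)) < inverse (real (Suc n))"
    by metis
  have c1: "(\<lambda>n. l2_norm (Trunc g (Nn n) - g)) \<longlonglongrightarrow> 0"
    by (rule conv[OF g _ sa nn]) (use Nn in \<open>auto simp: a_def\<close>)
  have c2: "(\<lambda>n. l2_norm (Trunc (Sop d g) (Nn n) - Sop d g)) \<longlonglongrightarrow> 0"
    by (rule conv[OF S _ sa nn]) (use Nn in \<open>auto simp: a_def\<close>)
  have "\<exists>f. (\<forall>n. f n \<in> fin_supp) \<and> (\<lambda>n. l2_norm (f n - g)) \<longlonglongrightarrow> 0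
          \<and> (\<lambda>n. l2_norm (T_op \<alpha> d (f n) - Sop d g)) \<longlonglongrightarrow> 0"
    by (rule exI[of _ "\<lambda>n. Trunc g (Nn n)"]) (simp add: Trunc_fin c1 c2 T_trunc[OF e' g])
  then show ?thesis unfolding graph_closure_def using g S by blast
qed


theorem theorem5:
  fixes \<alpha> :: real and d g :: "nat \<Rightarrow> complex"
  assumes "\<alpha> > -1" and "d \<in> Dtilde" and "g \<in> l2"
  shows "(g \<in> adj_dom fin_supp (T_op \<alpha> d) \<longleftrightarrow>
            summable (\<lambda>k. (cmod (g k * cnj (d k) + (cnj (d k) - cnj (dprev d k)) * (\<Sum>t<k. g t)))\<^sup>2))
       \<and> (g \<in> adj_dom fin_supp (T_op \<alpha> d) \<longrightarrow>
            adj fin_supp (T_op \<alpha> d) g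
              = (\<lambda>k. g k * cnj (d k) + (cnj (d k) - cnj (dprev d k)) * (\<Sum>t<k. g t)))
       \<and> (\<forall>s::nat. (\<lambda>k. if k = s then 1 else 0) \<in> adj_dom fin_supp (T_op \<alpha> d) \<longleftrightarrow>
            (\<lambda>k. cnj (d k) - cnj (dprev d k)) \<in> l2)
       \<and> ((\<lambda>k. cnj (d k) - cnj (dprev d k)) \<in> l2 \<longrightarrow>
            closable fin_supp (T_op \<alpha> d)
            \<and> (g \<in> closure_dom fin_supp (T_op \<alpha> d) \<longleftrightarrow>
                 summable (\<lambda>s. (cmod (g s * d s + (\<Sum>k. (d (k + s + 1) - d (k + s)) * g (k + s + 1))))\<^sup>2))
            \<and> (g \<in> closure_dom fin_supp (T_op \<alpha> d) \<longrightarrow>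
                 closure_op fin_supp (T_op \<alpha> d) g
                   = (\<lambda>s. g s * d s + (\<Sum>k. (d (k + s + 1) - d (k + s)) * g (k + s + 1)))))"
proof -
  have g: "g \<in> l2" by (rule assms(3))
  have P1: "g \<in> adj_dom fin_supp (T_op \<alpha> d) \<longleftrightarrow>
            summable (\<lambda>k. (cmod (g k * cnj (d k) + (cnj (d k) - cnj (dprev d k)) * (\<Sum>t<k. g t)))\<^sup>2)"
    using adj_dom_iff[OF g] by (simp add: l2_def hfun_def)
  have P2: "g \<in> adj_dom fin_supp (T_op \<alpha> d) \<longrightarrow>
            adj fin_supp (T_op \<alpha> d) g
              = (\<lambda>k. g k * cnj (d k) + (cnj (d k) - cnj (dprev d k)) * (\<Sum>t<k. g t))"
    using adj_eq by (simp add: hfun_def)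
  have P3: "\<forall>s::nat. (\<lambda>k. if k = s then 1 else 0) \<in> adj_dom fin_supp (T_op \<alpha> d) \<longleftrightarrow>
            (\<lambda>k. cnj (d k) - cnj (dprev d k)) \<in> l2"
  proof
    fix s :: nat
    show "(\<lambda>k. if k = s then 1 else 0) \<in> adj_dom fin_supp (T_op \<alpha> d) \<longleftrightarrow>
            (\<lambda>k. cnj (d k) - cnj (dprev d k)) \<in> l2"
      using adj_dom_iff[OF fin_l2[OF delta_fin[of s]]] iii[of d s] by simp
  qed
  have P4: "(\<lambda>k. cnj (d k) - cnj (dprev d k)) \<in> l2 \<longrightarrow>
            closable fin_supp (T_op \<alpha> d)
            \<and> (g \<in> closure_dom fin_supp (T_op \<alpha> d) \<longleftrightarrow>
                 summable (\<lambda>s. (cmod (g s * d s + (\<Sum>k. (d (k + s + 1) - d (k + s)) * g (k + s + 1))))\<^sup>2))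
            \<and> (g \<in> closure_dom fin_supp (T_op \<alpha> d) \<longrightarrow>
                 closure_op fin_supp (T_op \<alpha> d) g
                   = (\<lambda>s. g s * d s + (\<Sum>k. (d (k + s + 1) - d (k + s)) * g (k + s + 1))))"
  proof
    assume e': "(\<lambda>k. cnj (d k) - cnj (dprev d k)) \<in> l2"
    have C1: "closable fin_supp (T_op \<alpha> d)"
      unfolding closable_def using closure_char[OF e'] by blast
    have C2: "g \<in> closure_dom fin_supp (T_op \<alpha> d) \<longleftrightarrow> Sop d g \<in> l2"
    proof
      assume "g \<in> closure_dom fin_supp (T_op \<alpha> d)"
      then obtain h where h: "(g, h) \<in> graph_closure fin_supp (T_op \<alpha> d)"
        unfolding closure_dom_def by blast
      then have "h \<in> l2" unfolding graph_closure_def by blast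
      then show "Sop d g \<in> l2" using closure_char[OF e' h] by simp
    next
      assume "Sop d g \<in> l2"
      then show "g \<in> closure_dom fin_supp (T_op \<alpha> d)"
        unfolding closure_dom_def using closure_exists[OF e' g] by blast
    qed
    have C3: "g \<in> closure_dom fin_supp (T_op \<alpha> d) \<longrightarrow> closure_op fin_supp (T_op \<alpha> d) g = Sop d g"
    proof
      assume "g \<in> closure_dom fin_supp (T_op \<alpha> d)"
      then have S: "Sop d g \<in> l2" using C2 by blast
      show "closure_op fin_supp (T_op \<alpha> d) g = Sop d g"
        unfolding closure_op_def
      proof (rule the_equality)
        show "(g, Sop d g) \<in> graph_closure fin_supp (T_op \<alpha> d)" by (rule closure_exists[OF e' g S])
      qed (rule closure_char[OF e'])
    qed
    show "closable fin_supp (T_op \<alpha> d)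
            \<and> (g \<in> closure_dom fin_supp (T_op \<alpha> d) \<longleftrightarrow>
                 summable (\<lambda>s. (cmod (g s * d s + (\<Sum>k. (d (k + s + 1) - d (k + s)) * g (k + s + 1))))\<^sup>2))
            \<and> (g \<in> closure_dom fin_supp (T_op \<alpha> d) \<longrightarrow>
                 closure_op fin_supp (T_op \<alpha> d) g
                   = (\<lambda>s. g s * d s + (\<Sum>k. (d (k + s + 1) - d (k + s)) * g (k + s + 1))))"
      using C1 C2 C3 unfolding Sop_def l2_def by simp
  qed
  show ?thesis using P1 P2 P3 P4 by blast
qed

end
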